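(* Let $(M,d)$ be a pointed metric space, let $\gamma\in(0,1]$, let $A\subseteq\widetilde M$, and let $u,v\in M$ with $u\ne v$. Then $A\cup\{(u,v)\}$ is $\gamma$-cyclically monotonic if and only if there exists $f\in B_{\mathrm{Lip}_0(M)}$ such that $f(m_{x,y})\ge\gamma$ for all $(x,y)\in A$, and $f(y)-f(x)+\gamma d(u,v)\le d(x,u)+d(y,v)$ for all $x,y\in\pi(A)$.
   Context: $M$ has base point $0$; $\mathrm{Lip}_0(M)$ is the real Banach space of Lipschitz $f\colon M\to\mathbb R$ with $f(0)=0$, normed by the best Lipschitz constant, with unit ball $B_{\mathrm{Lip}_0(M)}$. $\widetilde M=\{(x,y)\in M\times M:x\ne y\}$ and $f(m_{x,y})=(f(x)-f(y))/d(x,y)$. For $A\subseteq\widetilde M$, $\pi(A)=\{x\in M:\exists y\in M,\ (x,y)\in A\text{ or }(y,x)\in A\}$. For $\gamma\in(0,1]$, $A\subseteq\widetilde M$ is $\gamma$-cyclically monotonic if for every finite sequence $(x_1,y_1),\dots,(x_n,y_n)\in A$, with $y_{n+1}=y_1$, $\sum_{i=1}^n\min\{d(x_i,y_{i+1})-\gamma d(x_i,y_i),\,d(y_i,y_{i+1})\}\ge0$. *)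

theory Defs
  imports "HOL-Analysis.Analysis"
begin

definition tildeM :: "'a set \<Rightarrow> ('a \<times> 'a) set" where
  "tildeM M = {(x, y). x \<in> M \<and> y \<in> M \<and> x \<noteq> y}"

definition proj_pairs :: "('a \<times> 'a) set \<Rightarrow> 'a set" where
  "proj_pairs A = {x. \<exists>y. (x, y) \<in> A \<or> (y, x) \<in> A}"

definition gamma_cyc_mono ::
    "('a \<Rightarrow> 'a \<Rightarrow> real) \<Rightarrow> real \<Rightarrow> ('a \<times> 'a) set \<Rightarrow> bool" where
  "gamma_cyc_mono d \<gamma> A \<longleftrightarrow>
     (\<forall>n::nat. \<forall>x y :: nat \<Rightarrow> 'a. n \<ge> 1 \<longrightarrow> (\<forall>i<n. (x i, y i) \<in> A) \<longrightarrow>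
        0 \<le> (\<Sum>i<n. min (d (x i) (y (Suc i mod n)) - \<gamma> * d (x i) (y i))
                          (d (y i) (y (Suc i mod n)))))"

definition lip0_ball :: "'a set \<Rightarrow> ('a \<Rightarrow> 'a \<Rightarrow> real) \<Rightarrow> 'a \<Rightarrow> ('a \<Rightarrow> real) set" where
  "lip0_ball M d x0 = {f. f x0 = 0 \<and> (\<forall>x\<in>M. \<forall>y\<in>M. \<bar>f x - f y\<bar> \<le> d x y)}"

text \<open>Evaluation of f at the molecule m_{x,y}.\<close>
definition mol :: "('a \<Rightarrow> 'a \<Rightarrow> real) \<Rightarrow> ('a \<Rightarrow> real) \<Rightarrow> 'a \<Rightarrow> 'a \<Rightarrow> real" where
  "mol d f x y = (f x - f y) / d x y"

end

theory Submission imports Defs begin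

lemma cyc_tel:
  fixes h :: "nat \<Rightarrow> real"
  assumes "n \<ge> 1"
  shows "(\<Sum>i<n. h i - h (Suc i mod n)) = 0"
proof -
  obtain m where n: "n = Suc m" using assms by (cases n) auto
  have "(\<Sum>i<Suc m. h (Suc i mod Suc m)) = (\<Sum>i<m. h (Suc i mod Suc m)) + h 0"
    by (simp add: sum.lessThan_Suc)
  also have "(\<Sum>i<m. h (Suc i mod Suc m)) = (\<Sum>i<m. h (Suc i))"
    by (rule sum.cong) auto
  finally have a: "(\<Sum>i<Suc m. h (Suc i mod Suc m)) = (\<Sum>i<m. h (Suc i)) + h 0" .
  have b: "(\<Sum>i<Suc m. h i) = h 0 + (\<Sum>i<m. h (Suc i))"
    by (rule sum.lessThan_Suc_shift)
  show ?thesis using a b n by (simp add: sum_subtractf)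
qed

lemma easy_dir:
  assumes S: "\<forall>(x,y)\<in>B. x \<in> S \<and> y \<in> S"
    and L: "\<forall>s\<in>S. \<forall>t\<in>S. g s - g t \<le> d s t"
    and C: "\<forall>(x,y)\<in>B. \<gamma> * d x y \<le> g x - g y"
  shows "gamma_cyc_mono d \<gamma> B"
  unfolding gamma_cyc_mono_def
proof (intro allI impI)
  fix n :: nat and x y :: "nat \<Rightarrow> 'a"
  assume n: "n \<ge> 1" and xy: "\<forall>i<n. (x i, y i) \<in> B"
  have "(\<Sum>i<n. g (y i) - g (y (Suc i mod n))) \<le>
        (\<Sum>i<n. min (d (x i) (y (Suc i mod n)) - \<gamma> * d (x i) (y i)) (d (y i) (y (Suc i mod n))))"
  proof (rule sum_mono)
    fix i assume "i \<in> {..<n}"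
    hence i: "i < n" by simp
    have j: "Suc i mod n < n" using n by simp
    have p1: "(x i, y i) \<in> B" using xy i by blast
    have p2: "(x (Suc i mod n), y (Suc i mod n)) \<in> B" using xy j by blast
    have s: "x i \<in> S" "y i \<in> S" "y (Suc i mod n) \<in> S" using S p1 p2 by auto
    have c: "\<gamma> * d (x i) (y i) \<le> g (x i) - g (y i)" using C p1 by auto
    have l1: "g (x i) - g (y (Suc i mod n)) \<le> d (x i) (y (Suc i mod n))" using L s by auto
    have l2: "g (y i) - g (y (Suc i mod n)) \<le> d (y i) (y (Suc i mod n))" using L s by auto
    show "g (y i) - g (y (Suc i mod n)) \<le> min (d (x i) (y (Suc i mod n)) - \<gamma> * d (x i) (y i)) (d (y i) (y (Suc i mod n)))"
      using c l1 l2 by simp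
  qed
  then show "0 \<le> (\<Sum>i<n. min (d (x i) (y (Suc i mod n)) - \<gamma> * d (x i) (y i)) (d (y i) (y (Suc i mod n))))"
    using cyc_tel[OF n, of "\<lambda>i. g (y i)"] by simp
qed


definition Wt :: "('a \<Rightarrow> 'a \<Rightarrow> real) \<Rightarrow> real \<Rightarrow> 'a \<Rightarrow> 'a \<Rightarrow> nat \<Rightarrow> (nat \<Rightarrow> 'a) \<Rightarrow> (nat \<Rightarrow> 'a) \<Rightarrow> real" where
  "Wt d \<gamma> r z n x y = (if n = 0 then d z r else
     d z (x (n - 1)) + (\<Sum>i<n-1. d (x i) (y (Suc i))) - \<gamma> * (\<Sum>i<n. d (x i) (y i)) + d (y 0) r)"

lemma hard_dir:
  assumes ms: "Metric_space M d" and B: "B \<subseteq> M \<times> M" and r: "r \<in> M"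
    and cm: "gamma_cyc_mono d \<gamma> B"
  shows "\<exists>g. (\<forall>a\<in>M. \<forall>b\<in>M. g a - g b \<le> d a b) \<and> (\<forall>(x,y)\<in>B. \<gamma> * d x y \<le> g x - g y)"
proof -
  interpret Metric_space M d by (rule ms)
  have cm': "0 \<le> (\<Sum>i<n. min (d (x i) (y (Suc i mod n)) - \<gamma> * d (x i) (y i)) (d (y i) (y (Suc i mod n))))"
    if "1 \<le> n" "\<forall>i<n. (x i, y i) \<in> B" for n x y
    using cm that unfolding gamma_cyc_mono_def by blast
  define WS where "WS z = {Wt d \<gamma> r z n x y | n x y. \<forall>i<n. (x i, y i) \<in> B}" for z
  define D where "D z = Inf (WS z)" for z
  have ne: "d z r \<in> WS z" for z
    unfolding WS_def Wt_def by (rule CollectI, rule exI[of _ 0]) auto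
  have lb: "- d r z \<le> w" if z: "z \<in> M" and w: "w \<in> WS z" for z w
  proof -
    obtain n x y where w: "w = Wt d \<gamma> r z n x y" and xy: "\<forall>i<n. (x i, y i) \<in> B"
      using w unfolding WS_def by blast
    show ?thesis
    proof (cases n)
      case 0
      hence "w = d z r" using w by (simp add: Wt_def)
      moreover have "0 \<le> d z r" "0 \<le> d r z" by simp_all
      ultimately show ?thesis by linarith
    next
      case (Suc m)
      have inM: "x i \<in> M" "y i \<in> M" if "i < Suc m" for i
        using xy that B Suc by auto
      have "0 \<le> (\<Sum>i<Suc m. min (d (x i) (y (Suc i mod Suc m)) - \<gamma> * d (x i) (y i)) (d (y i) (y (Suc i mod Suc m))))"
        using cm'[of "Suc m" x y] xy Suc by simp
      also have "\<dots> \<le> (\<Sum>i<Suc m. d (x i) (y (Suc i mod Suc m)) - \<gamma> * d (x i) (y i))"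
        by (rule sum_mono) simp
      also have "\<dots> = (\<Sum>i<Suc m. d (x i) (y (Suc i mod Suc m))) - \<gamma> * (\<Sum>i<Suc m. d (x i) (y i))"
        by (simp only: sum_subtractf sum_distrib_left)
      also have "(\<Sum>i<Suc m. d (x i) (y (Suc i mod Suc m))) = (\<Sum>i<m. d (x i) (y (Suc i mod Suc m))) + d (x m) (y 0)"
        by simp
      also have "(\<Sum>i<m. d (x i) (y (Suc i mod Suc m))) = (\<Sum>i<m. d (x i) (y (Suc i)))"
        by (rule sum.cong) auto
      finally have c: "0 \<le> (\<Sum>i<m. d (x i) (y (Suc i))) + d (x m) (y 0) - \<gamma> * (\<Sum>i<Suc m. d (x i) (y i))" .
      have t1: "d (x m) (y 0) \<le> d (x m) z + d z (y 0)" using triangle inM z by simp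
      have t2: "d z (y 0) \<le> d z r + d r (y 0)" using triangle inM z r by simp
      have "w = d z (x m) + (\<Sum>i<m. d (x i) (y (Suc i))) - \<gamma> * (\<Sum>i<Suc m. d (x i) (y i)) + d (y 0) r"
        using w Suc by (simp add: Wt_def)
      thus ?thesis using c t1 t2 commute[of z r] commute[of "x m" z] commute[of "y 0" r] by linarith
    qed
  qed
  have bdd: "bdd_below (WS z)" if "z \<in> M" for z
    by (rule bdd_belowI[of _ "- d r z"]) (rule lb[OF that])
  have mono: "D a \<le> d a b + D b" if a: "a \<in> M" and b: "b \<in> M" for a b
  proof -
    have "D a - d a b \<le> D b" unfolding D_def
    proof (rule cInf_greatest)
      show "WS b \<noteq> {}" using ne by blast
      fix w assume "w \<in> WS b"
      then obtain n x y where w: "w = Wt d \<gamma> r b n x y" and xy: "\<forall>i<n. (x i, y i) \<in> B"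
        unfolding WS_def by blast
      have inW: "Wt d \<gamma> r a n x y \<in> WS a" unfolding WS_def using xy by blast
      have le: "Wt d \<gamma> r a n x y \<le> d a b + w"
      proof (cases n)
        case 0 thus ?thesis using w triangle[OF a b r] by (simp add: Wt_def)
      next
        case (Suc m)
        have "x m \<in> M" using xy B Suc by auto
        thus ?thesis using w triangle[OF a b, of "x m"] Suc by (simp add: Wt_def)
      qed
      have "Inf (WS a) \<le> Wt d \<gamma> r a n x y" by (rule cInf_lower[OF inW bdd[OF a]])
      thus "Inf (WS a) - d a b \<le> w" using le by linarith
    qed
    thus ?thesis by linarith
  qed
  have edge: "D x + \<gamma> * d x y \<le> D y" if xy0: "(x, y) \<in> B" for x y
  proof -
    have xM: "x \<in> M" and yM: "y \<in> M" using xy0 B by auto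
    show ?thesis unfolding D_def
    proof (rule cInf_greatest)
      show "WS y \<noteq> {}" using ne by blast
      fix w assume "w \<in> WS y"
      then obtain n xs ys where w: "w = Wt d \<gamma> r y n xs ys" and xy: "\<forall>i<n. (xs i, ys i) \<in> B"
        unfolding WS_def by blast
      define xs' where "xs' = xs(n := x)"
      define ys' where "ys' = ys(n := y)"
      have xy': "\<forall>i<Suc n. (xs' i, ys' i) \<in> B" using xy xy0 unfolding xs'_def ys'_def
        by (auto simp: less_Suc_eq)
      have inW: "Wt d \<gamma> r x (Suc n) xs' ys' \<in> WS x" unfolding WS_def using xy' by blast
      have eq: "Wt d \<gamma> r x (Suc n) xs' ys' = w - \<gamma> * d x y"
      proof (cases n)
        case 0 thus ?thesis using w xM by (simp add: Wt_def xs'_def ys'_def)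
      next
        case (Suc m)
        have s1: "(\<Sum>i<Suc m. d (xs' i) (ys' (Suc i))) = (\<Sum>i<m. d (xs i) (ys (Suc i))) + d (xs m) y"
          using Suc by (simp add: xs'_def ys'_def)
        have s2: "(\<Sum>i<Suc (Suc m). d (xs' i) (ys' i)) = (\<Sum>i<Suc m. d (xs i) (ys i)) + d x y"
        proof -
          have "(\<Sum>i<Suc (Suc m). d (xs' i) (ys' i)) = (\<Sum>i<Suc m. d (xs' i) (ys' i)) + d x y"
            using Suc by (simp add: xs'_def ys'_def)
          also have "(\<Sum>i<Suc m. d (xs' i) (ys' i)) = (\<Sum>i<Suc m. d (xs i) (ys i))"
            using Suc by (intro sum.cong) (auto simp: xs'_def ys'_def)
          finally show ?thesis .
        qed
        have "ys' 0 = ys 0" using Suc by (simp add: ys'_def)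
        moreover have "xs' (Suc m) = x" using Suc by (simp add: xs'_def)
        ultimately show ?thesis using w Suc s1 s2 xM commute[of y "xs m"]
          by (simp add: Wt_def algebra_simps)
      qed
      have "Inf (WS x) \<le> Wt d \<gamma> r x (Suc n) xs' ys'" by (rule cInf_lower[OF inW bdd[OF xM]])
      thus "Inf (WS x) + \<gamma> * d x y \<le> w" using eq by linarith
    qed
  qed
  show ?thesis
  proof (intro exI[of _ "\<lambda>z. - D z"] conjI ballI)
    fix a b assume "a \<in> M" "b \<in> M"
    thus "- D a - - D b \<le> d a b" using mono[of b a] commute[of a b] by simp
  next
    fix p assume "p \<in> B"
    then obtain x y where p: "p = (x, y)" "(x,y) \<in> B" by (cases p) auto
    thus "case p of (x, y) \<Rightarrow> \<gamma> * d x y \<le> - D x - - D y" using edge[of x y] by simp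
  qed
qed


lemma exist_ab:
  assumes ms: "Metric_space M d" and P: "P \<subseteq> M" and u: "u \<in> M" and v: "v \<in> M"
    and f: "\<forall>x\<in>M. \<forall>y\<in>M. \<bar>f x - f y\<bar> \<le> d x y"
    and g: "0 < \<gamma>" "\<gamma> \<le> 1"
    and H: "\<forall>x\<in>P. \<forall>y\<in>P. f y - f x + \<gamma> * d u v \<le> d x u + d y v"
  shows "\<exists>a b. (\<forall>x\<in>P. \<bar>a - f x\<bar> \<le> d x u) \<and> (\<forall>y\<in>P. \<bar>b - f y\<bar> \<le> d y v)
      \<and> \<gamma> * d u v \<le> a - b \<and> a - b \<le> d u v"
proof (cases "P = {}")
  case True
  interpret Metric_space M d by (rule ms)
  have "0 \<le> d u v" by simp
  hence "\<gamma> * d u v \<le> 1 * d u v" using g by (intro mult_right_mono) auto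
  thus ?thesis using True by (intro exI[of _ "d u v"] exI[of _ 0]) simp
next
  case False
  interpret Metric_space M d by (rule ms)
  have fl: "f x - f y \<le> d x y" if "x \<in> M" "y \<in> M" for x y using f that by fastforce
  define Ua where "Ua = Inf ((\<lambda>x. f x + d x u) ` P)"
  define La where "La = Sup ((\<lambda>x. f x - d x u) ` P)"
  define Ub where "Ub = Inf ((\<lambda>x. f x + d x v) ` P)"
  define Lb where "Lb = Sup ((\<lambda>x. f x - d x v) ` P)"
  have bUa: "bdd_below ((\<lambda>x. f x + d x u) ` P)"
  proof (rule bdd_belowI[of _ "f u"])
    fix w assume "w \<in> (\<lambda>x. f x + d x u) ` P"
    then obtain x where "x \<in> P" "w = f x + d x u" by blast
    thus "f u \<le> w" using fl[of u x] P u commute[of u x] by auto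
  qed
  have bUb: "bdd_below ((\<lambda>x. f x + d x v) ` P)"
  proof (rule bdd_belowI[of _ "f v"])
    fix w assume "w \<in> (\<lambda>x. f x + d x v) ` P"
    then obtain x where "x \<in> P" "w = f x + d x v" by blast
    thus "f v \<le> w" using fl[of v x] P v commute[of v x] by auto
  qed
  have bLa: "bdd_above ((\<lambda>x. f x - d x u) ` P)"
  proof (rule bdd_aboveI[of _ "f u"])
    fix w assume "w \<in> (\<lambda>x. f x - d x u) ` P"
    then obtain x where "x \<in> P" "w = f x - d x u" by blast
    thus "w \<le> f u" using fl[of x u] P u by auto
  qed
  have bLb: "bdd_above ((\<lambda>x. f x - d x v) ` P)"
  proof (rule bdd_aboveI[of _ "f v"])
    fix w assume "w \<in> (\<lambda>x. f x - d x v) ` P"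
    then obtain x where "x \<in> P" "w = f x - d x v" by blast
    thus "w \<le> f v" using fl[of x v] P v by auto
  qed
  have Ua_le: "Ua \<le> f x + d x u" if "x \<in> P" for x
    unfolding Ua_def using that bUa by (auto intro: cInf_lower)
  have Ub_le: "Ub \<le> f x + d x v" if "x \<in> P" for x
    unfolding Ub_def using that bUb by (auto intro: cInf_lower)
  have La_ge: "f x - d x u \<le> La" if "x \<in> P" for x
    unfolding La_def using that bLa by (auto intro: cSup_upper)
  have Lb_ge: "f x - d x v \<le> Lb" if "x \<in> P" for x
    unfolding Lb_def using that bLb by (auto intro: cSup_upper)
  have LaUa: "La \<le> Ua"
  proof -
    have "La \<le> f y + d y u" if y: "y \<in> P" for y
      unfolding La_def
    proof (rule cSup_least)
      show "(\<lambda>x. f x - d x u) ` P \<noteq> {}" using False by blast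
      fix w assume "w \<in> (\<lambda>x. f x - d x u) ` P"
      then obtain x where x: "x \<in> P" "w = f x - d x u" by blast
      have "f x - f y \<le> d x y" using fl x y P by auto
      moreover have "d x y \<le> d x u + d u y" using triangle x y P u by auto
      ultimately show "w \<le> f y + d y u" using x commute[of u y] by linarith
    qed
    hence "La - 0 \<le> Ua" unfolding Ua_def using False by (auto intro!: cInf_greatest)
    thus ?thesis by simp
  qed
  have LbUb: "Lb \<le> Ub"
  proof -
    have "Lb \<le> f y + d y v" if y: "y \<in> P" for y
      unfolding Lb_def
    proof (rule cSup_least)
      show "(\<lambda>x. f x - d x v) ` P \<noteq> {}" using False by blast
      fix w assume "w \<in> (\<lambda>x. f x - d x v) ` P"
      then obtain x where x: "x \<in> P" "w = f x - d x v" by blast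
      have "f x - f y \<le> d x y" using fl x y P by auto
      moreover have "d x y \<le> d x v + d v y" using triangle x y P v by auto
      ultimately show "w \<le> f y + d y v" using x commute[of v y] by linarith
    qed
    hence "Lb \<le> Ub" unfolding Ub_def using False by (auto intro!: cInf_greatest)
    thus ?thesis by simp
  qed
  have LaUb: "La \<le> Ub + d u v"
  proof -
    have "La - d u v \<le> f y + d y v" if y: "y \<in> P" for y
    proof -
      have "La \<le> f y + d y v + d u v" unfolding La_def
      proof (rule cSup_least)
        show "(\<lambda>x. f x - d x u) ` P \<noteq> {}" using False by blast
        fix w assume "w \<in> (\<lambda>x. f x - d x u) ` P"
        then obtain x where x: "x \<in> P" "w = f x - d x u" by blast
        have "f x - f y \<le> d x y" using fl x y P by auto
        moreover have "d x y \<le> d x u + d u y" using triangle x y P u by auto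
        moreover have "d u y \<le> d u v + d v y" using triangle y P u v by auto
        ultimately show "w \<le> f y + d y v + d u v" using x commute[of v y] by linarith
      qed
      thus ?thesis by linarith
    qed
    hence "La - d u v \<le> Ub" unfolding Ub_def using False by (auto intro!: cInf_greatest)
    thus ?thesis by simp
  qed
  have LbUa: "Lb + \<gamma> * d u v \<le> Ua"
  proof -
    have "Lb + \<gamma> * d u v \<le> f x + d x u" if x: "x \<in> P" for x
    proof -
      have "Lb \<le> f x + d x u - \<gamma> * d u v" unfolding Lb_def
      proof (rule cSup_least)
        show "(\<lambda>x. f x - d x v) ` P \<noteq> {}" using False by blast
        fix w assume "w \<in> (\<lambda>x. f x - d x v) ` P"
        then obtain y where y: "y \<in> P" "w = f y - d y v" by blast
        show "w \<le> f x + d x u - \<gamma> * d u v" using H x y by force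
      qed
      thus ?thesis by linarith
    qed
    thus ?thesis unfolding Ua_def using False by (auto intro!: cInf_greatest)
  qed
  define a where "a = min Ua (Ub + d u v)"
  define b where "b = max Lb (a - d u v)"
  have duv: "0 \<le> d u v" by simp
  have "\<gamma> * d u v \<le> 1 * d u v" using g duv by (intro mult_right_mono) auto
  hence gd: "\<gamma> * d u v \<le> d u v" by simp
  have gd0: "0 \<le> \<gamma> * d u v" using g duv by simp
  show ?thesis
  proof (rule exI[of _ a], rule exI[of _ b], intro conjI ballI)
    fix x assume x: "x \<in> P"
    show "\<bar>a - f x\<bar> \<le> d x u"
      using Ua_le[OF x] La_ge[OF x] LaUa LaUb unfolding a_def by (auto simp: abs_le_iff min_def max_def)
  next
    fix y assume y: "y \<in> P"
    show "\<bar>b - f y\<bar> \<le> d y v"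
      using Ub_le[OF y] Lb_ge[OF y] LbUb unfolding b_def a_def by (auto simp: abs_le_iff min_def max_def)
  next
    show "\<gamma> * d u v \<le> a - b" using LbUa LbUb gd unfolding b_def a_def by (auto simp: min_def max_def)
  next
    show "a - b \<le> d u v" unfolding b_def by simp
  qed
qed


theorem lemma3p3:
  fixes M :: "'a set" and d :: "'a \<Rightarrow> 'a \<Rightarrow> real" and x0 :: 'a
    and \<gamma> :: real and A :: "('a \<times> 'a) set" and u v :: 'a
  assumes "Metric_space M d"
    and "x0 \<in> M"
    and "0 < \<gamma>" and "\<gamma> \<le> 1"
    and "A \<subseteq> tildeM M"
    and "u \<in> M" and "v \<in> M" and "u \<noteq> v"
  shows "gamma_cyc_mono d \<gamma> (A \<union> {(u, v)}) \<longleftrightarrow>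
    (\<exists>f \<in> lip0_ball M d x0.
        (\<forall>(x, y) \<in> A. \<gamma> \<le> mol d f x y) \<and>
        (\<forall>x \<in> proj_pairs A. \<forall>y \<in> proj_pairs A.
            f y - f x + \<gamma> * d u v \<le> d x u + d y v))"
proof -
  note ms = assms(1)
  interpret Metric_space M d by (rule ms)
  have AM: "A \<subseteq> M \<times> M" and Adist: "\<And>x y. (x,y) \<in> A \<Longrightarrow> x \<noteq> y"
    using assms(5) unfolding tildeM_def by auto
  have PM: "proj_pairs A \<subseteq> M" using AM unfolding proj_pairs_def by auto
  have Pin: "x \<in> proj_pairs A" "y \<in> proj_pairs A" if "(x,y) \<in> A" for x y
    using that unfolding proj_pairs_def by auto
  show ?thesis
  proof
    assume cm: "gamma_cyc_mono d \<gamma> (A \<union> {(u, v)})"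
    have BM: "A \<union> {(u, v)} \<subseteq> M \<times> M" using AM assms(6,7) by auto
    obtain g where gl: "\<forall>a\<in>M. \<forall>b\<in>M. g a - g b \<le> d a b"
      and gc: "\<forall>(x,y)\<in>A \<union> {(u, v)}. \<gamma> * d x y \<le> g x - g y"
      using hard_dir[OF ms BM assms(2) cm] by blast
    define f where "f z = g z - g x0" for z
    show "\<exists>f \<in> lip0_ball M d x0.
        (\<forall>(x, y) \<in> A. \<gamma> \<le> mol d f x y) \<and>
        (\<forall>x \<in> proj_pairs A. \<forall>y \<in> proj_pairs A.
            f y - f x + \<gamma> * d u v \<le> d x u + d y v)"
    proof (rule bexI[of _ f], intro conjI ballI)
      show "f \<in> lip0_ball M d x0"
        unfolding lip0_ball_def f_def
      proof (intro CollectI conjI ballI)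
        fix x y assume "x \<in> M" "y \<in> M"
        thus "\<bar>g x - g x0 - (g y - g x0)\<bar> \<le> d x y"
          using gl commute[of x y] by (auto simp: abs_le_iff) (fastforce+)
      qed simp
    next
      fix p assume "p \<in> A"
      then obtain x y where p: "p = (x,y)" "(x,y) \<in> A" by (cases p) auto
      have "x \<in> M" "y \<in> M" "x \<noteq> y" using p AM Adist by auto
      hence pos: "0 < d x y" using nonneg[of x y] zero[of x y] by linarith
      have "\<gamma> * d x y \<le> f x - f y" using gc p unfolding f_def by auto
      hence "\<gamma> \<le> (f x - f y) / d x y" using pos by (simp add: le_divide_eq)
      thus "case p of (x, y) \<Rightarrow> \<gamma> \<le> mol d f x y" using p by (simp add: mol_def)
    next
      fix x y assume x: "x \<in> proj_pairs A" and y: "y \<in> proj_pairs A"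
      have xM: "x \<in> M" and yM: "y \<in> M" using x y PM by auto
      have "\<gamma> * d u v \<le> g u - g v" using gc by auto
      moreover have "g u - g x \<le> d u x" using gl xM assms(6) by auto
      moreover have "g y - g v \<le> d y v" using gl yM assms(7) by auto
      ultimately show "f y - f x + \<gamma> * d u v \<le> d x u + d y v"
        unfolding f_def using commute[of u x] by linarith
    qed
  next
    assume "\<exists>f \<in> lip0_ball M d x0.
        (\<forall>(x, y) \<in> A. \<gamma> \<le> mol d f x y) \<and>
        (\<forall>x \<in> proj_pairs A. \<forall>y \<in> proj_pairs A.
            f y - f x + \<gamma> * d u v \<le> d x u + d y v)"
    then obtain f where fb: "f \<in> lip0_ball M d x0"
      and fm: "\<forall>(x, y) \<in> A. \<gamma> \<le> mol d f x y"
      and fH: "\<forall>x \<in> proj_pairs A. \<forall>y \<in> proj_pairs A. f y - f x + \<gamma> * d u v \<le> d x u + d y v"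
      by blast
    have fl: "\<forall>x\<in>M. \<forall>y\<in>M. \<bar>f x - f y\<bar> \<le> d x y" using fb unfolding lip0_ball_def by auto
    obtain a b where ha: "\<forall>x\<in>proj_pairs A. \<bar>a - f x\<bar> \<le> d x u"
      and hb: "\<forall>y\<in>proj_pairs A. \<bar>b - f y\<bar> \<le> d y v"
      and hab1: "\<gamma> * d u v \<le> a - b" and hab2: "a - b \<le> d u v"
      using exist_ab[OF ms PM assms(6,7) fl assms(3,4) fH] by blast
    define g where "g z = (if z = u then a else if z = v then b else f z)" for z
    define S where "S = proj_pairs A \<union> {u, v}"
    have gP: "g p = f p" if "p \<in> proj_pairs A" for p
    proof -
      have pM: "p \<in> M" using that PM by auto
      have "p = u \<Longrightarrow> a = f p" using ha that assms(6) by fastforce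
      moreover have "p = v \<Longrightarrow> b = f p" using hb that assms(7) by fastforce
      ultimately show ?thesis unfolding g_def by auto
    qed
    have gu: "g u = a" and gv: "g v = b" unfolding g_def using assms(8) by auto
    show "gamma_cyc_mono d \<gamma> (A \<union> {(u, v)})"
    proof (rule easy_dir[where S = S and g = g])
      show "\<forall>(x,y)\<in>A \<union> {(u, v)}. x \<in> S \<and> y \<in> S" using Pin unfolding S_def by auto
    next
      show "\<forall>(x,y)\<in>A \<union> {(u, v)}. \<gamma> * d x y \<le> g x - g y"
      proof
        fix p assume "p \<in> A \<union> {(u, v)}"
        then consider "p = (u,v)" | x y where "p = (x,y)" "(x,y) \<in> A" by (cases p) auto
        thus "case p of (x, y) \<Rightarrow> \<gamma> * d x y \<le> g x - g y"
        proof cases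
          case 1 thus ?thesis using gu gv hab1 by simp
        next
          case (2 x y)
          have "x \<in> M" "y \<in> M" "x \<noteq> y" using 2 AM Adist by auto
          hence pos: "0 < d x y" using nonneg[of x y] zero[of x y] by linarith
          have "\<gamma> \<le> (f x - f y) / d x y" using fm 2 by (auto simp: mol_def)
          hence "\<gamma> * d x y \<le> f x - f y" using pos by (simp add: le_divide_eq)
          thus ?thesis using 2 gP Pin by simp
        qed
      qed
    next
      show "\<forall>s\<in>S. \<forall>t\<in>S. g s - g t \<le> d s t"
      proof (intro ballI)
        fix s t assume s: "s \<in> S" and t: "t \<in> S"
        have key: "\<bar>g s - g t\<bar> \<le> d s t" if s: "s \<in> S" and t: "t \<in> S" for s t
        proof -
          have sM: "s \<in> M" and tM: "t \<in> M" using s t PM assms(6,7) unfolding S_def by auto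
          have "0 \<le> \<gamma> * d u v" using assms(3) by simp
          hence c1: "\<bar>a - b\<bar> \<le> d u v" using hab1 hab2 nonneg[of u v] by linarith
          consider "s = u" | "s = v" | "s \<noteq> u" "s \<noteq> v" "s \<in> proj_pairs A"
            using s unfolding S_def by auto
          then show ?thesis
          proof cases
            case 1
            consider "t = u" | "t = v" | "t \<noteq> u" "t \<noteq> v" "t \<in> proj_pairs A"
              using t unfolding S_def by auto
            thus ?thesis
            proof cases
              case 3 thus ?thesis using 1 ha gu gP[of t] commute[of t u] by auto
            qed (use 1 gu gv c1 sM in auto)
          next
            case 2
            consider "t = u" | "t = v" | "t \<noteq> u" "t \<noteq> v" "t \<in> proj_pairs A"
              using t unfolding S_def by auto
            thus ?thesis
            proof cases
              case 1 thus ?thesis using 2 gu gv c1 commute[of u v] by (auto simp: abs_minus_commute)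
            next
              case 3 thus ?thesis using 2 hb gv gP[of t] commute[of t v] by auto
            qed (use 2 sM in auto)
          next
            case 3
            consider "t = u" | "t = v" | "t \<noteq> u" "t \<noteq> v" "t \<in> proj_pairs A"
              using t unfolding S_def by auto
            thus ?thesis
            proof cases
              case 1 thus ?thesis using 3 ha gu gP[of s] by (auto simp: abs_minus_commute)
            next
              case 2 thus ?thesis using 3 hb gv gP[of s] by (auto simp: abs_minus_commute)
            next
              case 3 thus ?thesis using \<open>s \<in> proj_pairs A\<close> gP fl sM tM by auto
            qed
          qed
        qed
        show "g s - g t \<le> d s t" using key[OF s t] by linarith
      qed
    qed
  qed
qed

end
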